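(* Let $\mathcal{H}$ be a real Hilbert space and $F:\mathcal{H}\rightrightarrows\mathcal{H}$ a set-valued operator with $\operatorname{zer}F:=\{x:0\in F(x)\}\neq\varnothing$. Let $(\gamma_n)_{n}\subset(0,+\infty)$, and let $(\alpha_n)_n$ be nondecreasing with $\alpha_n\in[0,\alpha]$ for all $n$, for some $\alpha\in[0,\tfrac13)$. Assume there is a linear map $v:\mathcal{H}\to\mathcal{H}$ such that the pair $(F,v)$ is monotone and, for every $n$, $\gamma_nF+v$ is injective and $\operatorname{ran}v\subset\operatorname{ran}(\gamma_nF+v)$. Let $x_0,x_1\in\mathcal{H}$ and for $n\ge1$ define \[ y_n=x_n+\alpha_n(x_n-x_{n-1}),\qquad x_{n+1}=(\gamma_nF+v)^{-1}\big(v(y_n)\big), \] i.e. $x_{n+1}$ is the unique point with $v(y_n)\in\gamma_nF(x_{n+1})+v(x_{n+1})$. Let $x^*\in\operatorname{zer}F$ and $a_n:=\|v(x_n)-v(x^* )\|^2$. Then (i) the sequence $(a_n)$ is bounded; (ii) $\sum_{n=1}^{\infty}\|v(x_n)-v(x_{n-1})\|^2<+\infty$.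
   Context: For set-valued $F_1,F_2:\mathcal{H}\rightrightarrows\mathcal{H}$, the pair $(F_1,F_2)$ is monotone if $\langle x_1^*-y_1^*,x_2^*-y_2^*\rangle\ge0$ for all $x,y\in\mathcal{H}$, $x_1^*\in F_1(x)$, $y_1^*\in F_1(y)$, $x_2^*\in F_2(x)$, $y_2^*\in F_2(y)$. $\operatorname{ran}$ denotes the range. *)

theory Defs
  imports "HOL-Analysis.Analysis"
begin

definition zer :: "('a::real_vector \<Rightarrow> 'a set) \<Rightarrow> 'a set" where
  "zer F = {x. 0 \<in> F x}"

definition ran_op :: "('a \<Rightarrow> 'b set) \<Rightarrow> 'b set" where
  "ran_op A = (\<Union>x. A x)"

definition op_inj :: "('a \<Rightarrow> 'b set) \<Rightarrow> bool" where
  "op_inj A \<longleftrightarrow> (\<forall>x y z. z \<in> A x \<and> z \<in> A y \<longrightarrow> x = y)"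

definition scale_add_op :: "real \<Rightarrow> ('a::real_vector \<Rightarrow> 'a set) \<Rightarrow> ('a \<Rightarrow> 'a) \<Rightarrow> 'a \<Rightarrow> 'a set" where
  "scale_add_op \<gamma> F v x = {\<gamma> *\<^sub>R u + v x | u. u \<in> F x}"

definition monotone_pair :: "('a::real_inner \<Rightarrow> 'a set) \<Rightarrow> ('a \<Rightarrow> 'a set) \<Rightarrow> bool" where
  "monotone_pair F1 F2 \<longleftrightarrow>
     (\<forall>x y x1 y1 x2 y2. x1 \<in> F1 x \<and> y1 \<in> F1 y \<and> x2 \<in> F2 x \<and> y2 \<in> F2 y
        \<longrightarrow> inner (x1 - y1) (x2 - y2) \<ge> 0)"

end

theory Submission imports Defs begin
lemma key:
  fixes a b c :: "'a::real_inner" and al :: real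
  assumes "0 \<le> al" "inner (b + al *\<^sub>R (b - a) - c) c \<ge> 0"
  shows "(norm c)\<^sup>2 - (1+al) * (norm b)\<^sup>2 + al * (norm a)\<^sup>2
     \<le> 2*al*(norm (b - a))\<^sup>2 - (1-al) * (norm (c - b))\<^sup>2"
proof -
  have h1: "0 \<le> al * (norm (a - 2 *\<^sub>R b + c))\<^sup>2" using assms(1) by auto
  show ?thesis using assms(2) h1
    unfolding power2_norm_eq_inner
    by (simp add: inner_diff_left inner_diff_right inner_add_left inner_add_right inner_commute algebra_simps)
qed

theorem corollary4p1:
  fixes F :: "'a::{real_inner, complete_space} \<Rightarrow> 'a set"
    and v :: "'a \<Rightarrow> 'a"
    and \<gamma> \<alpha>s :: "nat \<Rightarrow> real"
    and \<alpha> :: real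
    and x y :: "nat \<Rightarrow> 'a"
    and xstar :: 'a
  assumes zer_ne: "zer F \<noteq> {}"
    and gamma_pos: "\<And>n. \<gamma> n > 0"
    and alpha_mono: "mono \<alpha>s"
    and alpha_bnd: "\<And>n. 0 \<le> \<alpha>s n \<and> \<alpha>s n \<le> \<alpha>"
    and alpha_range: "0 \<le> \<alpha>" "\<alpha> < 1/3"
    and v_lin: "linear v"
    and mono_pair: "monotone_pair F (\<lambda>z. {v z})"
    and inj: "\<And>n. op_inj (scale_add_op (\<gamma> n) F v)"
    and ran: "\<And>n. range v \<subseteq> ran_op (scale_add_op (\<gamma> n) F v)"
    and y_def: "\<And>n. n \<ge> 1 \<Longrightarrow> y n = x n + \<alpha>s n *\<^sub>R (x n - x (n - 1))"
    and x_step: "\<And>n. n \<ge> 1 \<Longrightarrow> v (y n) \<in> scale_add_op (\<gamma> n) F v (x (Suc n))"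
    and xstar_zer: "xstar \<in> zer F"
  shows "bounded (range (\<lambda>n. (norm (v (x n) - v xstar))\<^sup>2)) \<and>
         summable (\<lambda>n. (norm (v (x (Suc n)) - v (x n)))\<^sup>2)"
proof -
  define V where "V n = v (x n)" for n
  define p where "p = v xstar"
  define \<phi> where "\<phi> n = (norm (V n - p))\<^sup>2" for n
  define \<delta> where "\<delta> n = (norm (V n - V (n - 1)))\<^sup>2" for n
  define \<mu> where "\<mu> n = \<phi> n - \<alpha>s n * \<phi> (n - 1) + 2 * \<alpha>s n * \<delta> n" for n
  have phi0: "\<phi> n \<ge> 0" for n unfolding \<phi>_def by simp
  have del0: "\<delta> n \<ge> 0" for n unfolding \<delta>_def by simp
  have ineq: "\<phi> (Suc n) - (1 + \<alpha>s n) * \<phi> n + \<alpha>s n * \<phi> (n - 1)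
      \<le> 2 * \<alpha>s n * \<delta> n - (1 - \<alpha>s n) * \<delta> (Suc n)" if n1: "n \<ge> 1" for n
  proof -
    obtain u where u: "u \<in> F (x (Suc n))" and eq: "v (y n) = \<gamma> n *\<^sub>R u + v (x (Suc n))"
      using x_step[OF n1] unfolding scale_add_op_def by blast
    have z: "0 \<in> F xstar" using xstar_zer unfolding zer_def by simp
    have m: "inner (u - 0) (v (x (Suc n)) - v xstar) \<ge> 0"
      using mono_pair u z unfolding monotone_pair_def by blast
    have vy: "v (y n) = V n + \<alpha>s n *\<^sub>R (V n - V (n - 1))"
      unfolding V_def y_def[OF n1] using v_lin
      by (simp add: linear_add linear_diff linear_scale)
    have ue: "u = (1 / \<gamma> n) *\<^sub>R (v (y n) - V (Suc n))"
      using eq gamma_pos[of n] unfolding V_def by simp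
    have "inner (v (y n) - V (Suc n)) (V (Suc n) - p) \<ge> 0"
    proof -
      have "inner u (V (Suc n) - p) = (1 / \<gamma> n) * inner (v (y n) - V (Suc n)) (V (Suc n) - p)"
        unfolding ue by simp
      then show ?thesis using m gamma_pos[of n] unfolding V_def p_def
        by (simp add: zero_le_divide_iff)
    qed
    then have h: "inner ((V n - p) + \<alpha>s n *\<^sub>R ((V n - p) - (V (n - 1) - p)) - (V (Suc n) - p)) (V (Suc n) - p) \<ge> 0"
      unfolding vy by (simp add: algebra_simps)
    have "(norm (V (Suc n) - p))\<^sup>2 - (1 + \<alpha>s n) * (norm (V n - p))\<^sup>2 + \<alpha>s n * (norm (V (n - 1) - p))\<^sup>2
     \<le> 2 * \<alpha>s n * (norm ((V n - p) - (V (n - 1) - p)))\<^sup>2 - (1 - \<alpha>s n) * (norm ((V (Suc n) - p) - (V n - p)))\<^sup>2"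
      by (rule key[OF _ h]) (use alpha_bnd in auto)
    then show ?thesis unfolding \<phi>_def \<delta>_def by simp
  qed
  have a1: "\<alpha> < 1" using alpha_range by simp
  have step: "\<mu> (Suc n) \<le> \<mu> n - (1 - 3 * \<alpha>) * \<delta> (Suc n)" if n1: "n \<ge> 1" for n
  proof -
    have am: "\<alpha>s n \<le> \<alpha>s (Suc n)" using alpha_mono by (simp add: mono_def)
    have f1: "\<alpha>s n * \<phi> n \<le> \<alpha>s (Suc n) * \<phi> n" using am phi0[of n] by (rule mult_right_mono)
    have f2: "\<alpha>s (Suc n) * \<delta> (Suc n) \<le> \<alpha> * \<delta> (Suc n)"
      using alpha_bnd[of "Suc n"] del0[of "Suc n"] by (simp add: mult_right_mono)
    have f3: "\<alpha>s n * \<delta> (Suc n) \<le> \<alpha> * \<delta> (Suc n)"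
      using alpha_bnd[of n] del0[of "Suc n"] by (simp add: mult_right_mono)
    show ?thesis using ineq[OF n1] f1 f2 f3 unfolding \<mu>_def by (simp add: algebra_simps)
  qed
  have tele: "\<mu> (Suc n) + (1 - 3 * \<alpha>) * (\<Sum>k<n. \<delta> (k + 2)) \<le> \<mu> 1" for n
  proof (induction n)
    case 0 then show ?case by simp
  next
    case (Suc n)
    have "\<mu> (Suc (Suc n)) \<le> \<mu> (Suc n) - (1 - 3 * \<alpha>) * \<delta> (Suc (Suc n))" by (rule step) simp
    then show ?case using Suc by (simp add: algebra_simps)
  qed
  have tsum0: "(\<Sum>k<n. \<delta> (k + 2)) \<ge> 0" for n by (simp add: del0 sum_nonneg)
  have mub: "\<phi> (Suc n) - \<alpha> * \<phi> n \<le> \<mu> 1" for n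
  proof -
    have "\<alpha>s (Suc n) * \<phi> n \<le> \<alpha> * \<phi> n" using alpha_bnd[of "Suc n"] phi0[of n] by (simp add: mult_right_mono)
    moreover have "0 \<le> \<alpha>s (Suc n) * \<delta> (Suc n)" using alpha_bnd[of "Suc n"] del0[of "Suc n"] by simp
    moreover have "0 \<le> (1 - 3 * \<alpha>) * (\<Sum>k<n. \<delta> (k + 2))" using alpha_range tsum0[of n] by simp
    ultimately show ?thesis using tele[of n] unfolding \<mu>_def by simp
  qed
  define M where "M = max (\<phi> 0) (\<bar>\<mu> 1\<bar> / (1 - \<alpha>))"
  have muM: "\<bar>\<mu> 1\<bar> \<le> (1 - \<alpha>) * M"
  proof -
    have "\<bar>\<mu> 1\<bar> / (1 - \<alpha>) \<le> M" unfolding M_def by simp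
    then show ?thesis using a1 by (simp add: field_simps)
  qed
  have phiM: "\<phi> n \<le> M" for n
  proof (induction n)
    case 0 then show ?case unfolding M_def by simp
  next
    case (Suc n)
    have "\<alpha> * \<phi> n \<le> \<alpha> * M" using Suc alpha_range by (simp add: mult_left_mono)
    then show ?case using mub[of n] muM by (simp add: algebra_simps)
  qed
  have bnd: "bounded (range \<phi>)"
    unfolding bounded_real using phiM phi0 by (metis abs_of_nonneg rangeE)
  have sumb: "(\<Sum>k<n. \<delta> (Suc k)) \<le> \<delta> 1 + (\<bar>\<mu> 1\<bar> + \<alpha> * M) / (1 - 3 * \<alpha>)" for n
  proof (cases n)
    case 0 then show ?thesis using del0[of 1] alpha_range muM phiM[of 0] phi0[of 0]
      by (simp add: add_nonneg_nonneg)
  next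
    case (Suc m)
    have e: "(\<Sum>k<n. \<delta> (Suc k)) = \<delta> 1 + (\<Sum>k<m. \<delta> (k + 2))"
      unfolding Suc by (subst sum.lessThan_Suc_shift) (simp add: numeral_2_eq_2)
    have "\<alpha>s (Suc m) * \<phi> m \<le> \<alpha> * \<phi> m" using alpha_bnd[of "Suc m"] phi0[of m] by (simp add: mult_right_mono)
    moreover have "\<alpha> * \<phi> m \<le> \<alpha> * M" using phiM[of m] alpha_range by (simp add: mult_left_mono)
    moreover have "0 \<le> \<alpha>s (Suc m) * \<delta> (Suc m)" using alpha_bnd[of "Suc m"] del0[of "Suc m"] by simp
    ultimately have "(1 - 3 * \<alpha>) * (\<Sum>k<m. \<delta> (k + 2)) \<le> \<bar>\<mu> 1\<bar> + \<alpha> * M"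
      using tele[of m] phi0[of "Suc m"] unfolding \<mu>_def by simp
    then have "(\<Sum>k<m. \<delta> (k + 2)) \<le> (\<bar>\<mu> 1\<bar> + \<alpha> * M) / (1 - 3 * \<alpha>)"
      using alpha_range by (simp add: field_simps)
    then show ?thesis unfolding e by simp
  qed
  have summ: "summable (\<lambda>n. \<delta> (Suc n))"
    by (rule summableI_nonneg_bounded[where x="\<delta> 1 + (\<bar>\<mu> 1\<bar> + \<alpha> * M) / (1 - 3 * \<alpha>)"])
       (use del0 sumb in auto)
  show ?thesis using bnd summ unfolding \<phi>_def \<delta>_def V_def p_def by simp
qed

end
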